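(* Let $d,n_S\ge 1$, $\sigma>0$, $r>0$, and let $X_S\in\mathbb{R}^{n_S\times d}$ be a fixed matrix such that $\hat\Sigma_S:=X_S^\top X_S/n_S$ is invertible. Observations are $\mathbf{y}_S=X_S\boldsymbol{\beta}^*+\mathbf{z}$ with $\mathbf{z}\sim\mathcal{N}(0,\sigma^2 I_{n_S})$ and unknown $\boldsymbol{\beta}^*\in\mathcal{B}:=\{\boldsymbol{\beta}\in\mathbb{R}^d:\|\boldsymbol{\beta}\|_2\le r\}$. Let $\Sigma_T\in\mathbb{R}^{d\times d}$ be positive definite, and suppose there is an orthogonal matrix $U$ and vectors $\mathbf{t},\mathbf{s}\in(0,\infty)^d$ with $\Sigma_T=U\operatorname{diag}(\mathbf{t})U^\top$ and $\hat\Sigma_S=U\operatorname{diag}(\mathbf{s})U^\top$. Define the minimax linear risk $$R_L(\mathcal{B}):=\min_{A\in\mathbb{R}^{d\times n_S}}\ \max_{\boldsymbol{\beta}^*\in\mathcal{B}}\ \mathbb{E}_{\mathbf{z}}\big\|\Sigma_T^{1/2}(A\mathbf{y}_S-\boldsymbol{\beta}^* )\big\|_2^2 .$$ Let $\lambda=\lambda(r)>0$ be determined by $\frac{\sigma^2}{n_S}\sum_{i=1}^d \frac{1}{s_i}\big(\sqrt{t_i}/\lambda-1\big)_+=r^2$. Then $$R_L(\mathcal{B})=\sum_{i=1}^d\frac{\sigma^2}{n_S}\frac{t_i}{s_i}\Big(1-\frac{\lambda}{\sqrt{t_i}}\Big)_+ ,$$ and this value is attained by the linear estimator $$\hat{\boldsymbol{\beta}}_{\mathrm{MM}}=\Sigma_T^{-1/2}U\big(I-\operatorname{diag}(\lambda/\sqrt{\mathbf{t}})\big)_+U^\top\Sigma_T^{1/2}\,\hat{\boldsymbol{\beta}}_{\mathrm{SS}},\qquad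 \hat{\boldsymbol{\beta}}_{\mathrm{SS}}:=\frac{1}{n_S}\hat\Sigma_S^{-1}X_S^\top\mathbf{y}_S,$$ where $\operatorname{diag}(\lambda/\sqrt{\mathbf{t}})$ is the diagonal matrix with entries $\lambda/\sqrt{t_i}$ and $(\cdot)_+$ is applied entrywise to the diagonal.
   Context: $(x)_+=\max(x,0)$. An estimator is called linear if it has the form $\mathbf{y}_S\mapsto A\mathbf{y}_S$ for a matrix $A$ that may depend on $X_S$, $n_S$, $\Sigma_T$ but not on $\mathbf{y}_S$. The expectation is over the noise $\mathbf{z}$ only; $X_S$ is treated as fixed. *)

theory Defs
  imports "HOL-Analysis.Analysis" "HOL-Probability.Probability"
begin

definition mdiag :: "real ^'d \<Rightarrow> real ^'d ^'d" where
  "mdiag v = (\<chi> i j. if i = j then v $ i else 0)"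

definition pos_def :: "real ^'d ^'d \<Rightarrow> bool" where
  "pos_def S \<longleftrightarrow> transpose S = S \<and> (\<forall>x. x \<noteq> 0 \<longrightarrow> x \<bullet> (S *v x) > 0)"

definition pos_semidef :: "real ^'d ^'d \<Rightarrow> bool" where
  "pos_semidef S \<longleftrightarrow> transpose S = S \<and> (\<forall>x. x \<bullet> (S *v x) \<ge> 0)"

definition msqrt :: "real ^'d ^'d \<Rightarrow> real ^'d ^'d" where
  "msqrt S = (THE B. pos_semidef B \<and> B ** B = S)"

definition gauss_noise :: "real \<Rightarrow> (real ^'n) measure" where
  "gauss_noise \<sigma> = density lborel (\<lambda>z. ennreal (\<Prod>i\<in>UNIV. normal_density 0 \<sigma> (z $ i)))"

definition lin_risk ::
  "real \<Rightarrow> real ^'d ^'n \<Rightarrow> real ^'n ^'d \<Rightarrow> real ^'d ^'d \<Rightarrow> real ^'d \<Rightarrow> real" where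
  "lin_risk \<sigma> X A ST \<beta> =
     (\<integral>z. (norm (msqrt ST *v (A *v (X *v \<beta> + z) - \<beta>)))\<^sup>2 \<partial>gauss_noise \<sigma>)"

definition minimax_lin_risk ::
  "real \<Rightarrow> real ^'d ^'n \<Rightarrow> real ^'d ^'d \<Rightarrow> real \<Rightarrow> real" where
  "minimax_lin_risk \<sigma> X ST r =
     (INF A :: real ^'n ^'d. SUP \<beta> \<in> cball 0 r. lin_risk \<sigma> X A ST \<beta>)"

end

theory Submission
  imports Defs
begin

lemma integral_lborel_prod:
  fixes f :: "'a::euclidean_space \<Rightarrow> real \<Rightarrow> real"
  assumes int: "\<And>b. b \<in> Basis \<Longrightarrow> integrable lborel (f b)"
  shows "integrable lborel (\<lambda>x::'a. \<Prod>b\<in>Basis. f b (x \<bullet> b))"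
    and "(\<integral>x. (\<Prod>b\<in>Basis. f b (x \<bullet> b)) \<partial>(lborel::'a measure)) = (\<Prod>b\<in>Basis. integral\<^sup>L lborel (f b))"
proof -
  interpret product_sigma_finite "\<lambda>_. lborel" by standard
  have meas[measurable]: "\<And>b. b \<in> Basis \<Longrightarrow> f b \<in> borel_measurable borel"
    using int by (simp add: borel_measurable_integrable)
  have m2: "(\<lambda>x::'a. \<Prod>b\<in>Basis. f b (x \<bullet> b)) \<in> borel_measurable borel"
    by (intro borel_measurable_prod) (auto intro: measurable_compose[OF _ meas])
  have eq: "\<And>x. (\<Prod>b\<in>Basis. f b ((\<Sum>c\<in>Basis. x c *\<^sub>R c) \<bullet> b)) = (\<Prod>b\<in>Basis. f b (x b))"
    by (intro prod.cong refl) (simp add: inner_sum_left inner_Basis if_distrib sum.delta cong: if_cong)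
  have T: "(\<lambda>f. \<Sum>b\<in>Basis. f b *\<^sub>R b) \<in> measurable (\<Pi>\<^sub>M b\<in>Basis. (lborel::real measure)) (borel::'a measure)"
    by measurable
  show "integrable lborel (\<lambda>x::'a. \<Prod>b\<in>Basis. f b (x \<bullet> b))"
    apply (subst lborel_eq)
    apply (subst integrable_distr_eq[OF T m2])
    apply (simp only: eq)
    by (rule product_integrable_prod) (auto intro: int)
  show "(\<integral>x. (\<Prod>b\<in>Basis. f b (x \<bullet> b)) \<partial>(lborel::'a measure)) = (\<Prod>b\<in>Basis. integral\<^sup>L lborel (f b))"
    apply (subst lborel_eq)
    apply (subst integral_distr[OF T m2])
    apply (simp only: eq)
    by (rule product_integral_prod) (auto intro: int)
qed

lemma Basis_vec_real: "(Basis :: (real^'n) set) = range (\<lambda>i. axis i 1)"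
  by (auto simp: Basis_vec_def)

lemma integral_vec_prod:
  fixes h :: "'n::finite \<Rightarrow> real \<Rightarrow> real"
  assumes int: "\<And>i. integrable lborel (h i)"
  shows "has_bochner_integral (lborel :: (real^'n) measure) (\<lambda>z. \<Prod>i\<in>UNIV. h i (z $ i)) (\<Prod>i\<in>UNIV. integral\<^sup>L lborel (h i))"
proof -
  define f where "f b = h (SOME i. b = axis i (1::real))" for b :: "real^'n"
  have fa: "f (axis i 1) = h i" for i
    unfolding f_def by (rule arg_cong[where f=h]) (rule some_equality, auto simp: axis_eq_axis)
  have inj: "inj (\<lambda>i::'n. axis i (1::real))" by (auto simp: inj_def axis_eq_axis)
  have e1: "(\<Prod>b\<in>Basis. f b (z \<bullet> b)) = (\<Prod>i\<in>UNIV. h i (z $ i))" for z :: "real^'n"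
    unfolding Basis_vec_real by (subst prod.reindex[OF inj]) (simp add: fa inner_axis)
  have e2: "(\<Prod>b\<in>(Basis::(real^'n) set). integral\<^sup>L lborel (f b)) = (\<Prod>i\<in>UNIV. integral\<^sup>L lborel (h i))"
    unfolding Basis_vec_real by (subst prod.reindex[OF inj]) (simp add: fa)
  have ib: "b \<in> Basis \<Longrightarrow> integrable lborel (f b)" for b :: "real^'n"
    unfolding Basis_vec_real using int fa by auto
  show ?thesis
    using integral_lborel_prod[of f, OF ib] unfolding e1 e2
    by (simp add: has_bochner_integral_iff)
qed

definition gdens :: "real \<Rightarrow> real^'n \<Rightarrow> real" where
  "gdens \<sigma> z = (\<Prod>i\<in>UNIV. normal_density 0 \<sigma> (z $ i))"

lemma gdens_meas[measurable]: "gdens \<sigma> \<in> borel_measurable borel"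
  unfolding gdens_def normal_density_def by measurable

lemma gdens_nonneg: "0 \<le> gdens \<sigma> z"
  unfolding gdens_def by (intro prod_nonneg) auto

lemma gauss_noise_eq: "gauss_noise \<sigma> = density lborel (\<lambda>z. ennreal (gdens \<sigma> z))"
  unfolding gauss_noise_def gdens_def ..

lemma gauss_moment:
  fixes e :: "'n::finite \<Rightarrow> nat"
  assumes "\<sigma> > 0"
  shows "has_bochner_integral (gauss_noise \<sigma>) (\<lambda>z::real^'n. \<Prod>i\<in>UNIV. (z $ i) ^ e i)
           (\<Prod>i\<in>UNIV. integral\<^sup>L lborel (\<lambda>x. normal_density 0 \<sigma> x * x ^ e i))"
  unfolding gauss_noise_eq
proof (rule has_bochner_integral_density)
  show "(\<lambda>z::real^'n. \<Prod>i\<in>UNIV. (z $ i) ^ e i) \<in> borel_measurable lborel" by measurable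
  show "gdens \<sigma> \<in> borel_measurable (lborel :: (real^'n) measure)" by measurable
  show "AE x in lborel. 0 \<le> gdens \<sigma> (x::real^'n)" by (simp add: gdens_nonneg)
  have "has_bochner_integral (lborel :: (real^'n) measure) (\<lambda>z. \<Prod>i\<in>UNIV. normal_density 0 \<sigma> (z $ i) * (z $ i) ^ e i)
     (\<Prod>i\<in>UNIV. integral\<^sup>L lborel (\<lambda>x. normal_density 0 \<sigma> x * x ^ e i))"
    by (rule integral_vec_prod) (use integrable_normal_moment[OF assms, of 0] in simp)
  then show "has_bochner_integral lborel (\<lambda>x. gdens \<sigma> x *\<^sub>R (\<Prod>i\<in>UNIV. x $ i ^ e i))
     (\<Prod>i\<in>UNIV. integral\<^sup>L lborel (\<lambda>x. normal_density 0 \<sigma> x * x ^ e i))"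
    by (simp add: gdens_def prod.distrib)
qed

lemma nmom: assumes "\<sigma> > 0"
  shows "integral\<^sup>L lborel (\<lambda>x. normal_density 0 \<sigma> x * x ^ 0) = 1"
    and "integral\<^sup>L lborel (\<lambda>x. normal_density 0 \<sigma> x * x ^ 1) = 0"
    and "integral\<^sup>L lborel (\<lambda>x. normal_density 0 \<sigma> x * x ^ 2) = \<sigma>\<^sup>2"
  using integral_normal_moment_even[OF assms, of 0 0] integral_normal_moment_odd[OF assms, of 0 0]
    integral_normal_moment_even[OF assms, of 0 1]
  by auto

lemma gmom_val: assumes "\<sigma> > 0" and "\<And>i. e i \<le> (2::nat)"
  shows "(\<Prod>i\<in>UNIV. integral\<^sup>L lborel (\<lambda>x. normal_density 0 \<sigma> x * x ^ e i)) =
         (\<Prod>i\<in>(UNIV::'n::finite set). (if e i = 0 then 1 else if e i = 1 then 0 else \<sigma>\<^sup>2))"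
proof (intro prod.cong refl)
  fix i
  have "e i = 0 \<or> e i = 1 \<or> e i = 2" using assms(2)[of i] by linarith
  then show "integral\<^sup>L lborel (\<lambda>x. normal_density 0 \<sigma> x * x ^ e i) = (if e i = 0 then 1 else if e i = 1 then 0 else \<sigma>\<^sup>2)"
    using nmom[OF assms(1)] by auto
qed

lemma gm_gen:
  fixes e :: "'n::finite \<Rightarrow> nat" and F :: "real^'n \<Rightarrow> real"
  assumes "\<sigma> > 0" "\<And>i. e i \<le> 2" "\<And>z. (\<Prod>i\<in>UNIV. (z $ i) ^ e i) = F z"
    "(\<Prod>i\<in>(UNIV::'n set). (if e i = 0 then 1 else if e i = 1 then 0 else \<sigma>\<^sup>2)) = v"
  shows "has_bochner_integral (gauss_noise \<sigma>) F v"
proof -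
  have "has_bochner_integral (gauss_noise \<sigma>) (\<lambda>z::real^'n::finite. \<Prod>i\<in>UNIV. (z $ i) ^ e i)
           (\<Prod>i\<in>UNIV. integral\<^sup>L lborel (\<lambda>x. normal_density 0 \<sigma> x * x ^ e i))"
    by (rule gauss_moment[OF assms(1)])
  then show ?thesis unfolding gmom_val[OF assms(1,2)] assms(3,4) .
qed

lemma gm1: assumes "\<sigma> > 0" shows "has_bochner_integral (gauss_noise \<sigma>) (\<lambda>z::real^'n::finite. 1::real) 1"
  by (rule gm_gen[OF assms, where e="\<lambda>_. 0"]) auto

lemma gm2: assumes "\<sigma> > 0" shows "has_bochner_integral (gauss_noise \<sigma>) (\<lambda>z::real^'n::finite. z $ j) 0"
proof (rule gm_gen[OF assms, where e="\<lambda>i. if i = j then (1::nat) else 0"])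
  fix z :: "real^'n"
  have "(\<Prod>i\<in>UNIV. (z $ i) ^ (if i = j then (1::nat) else 0)) = (\<Prod>i\<in>UNIV. (if i = j then z $ j else 1))"
    by (intro prod.cong) auto
  also have "\<dots> = z $ j" by (simp add: prod.delta)
  finally show "(\<Prod>i\<in>UNIV. (z $ i) ^ (if i = j then (1::nat) else 0)) = z $ j" .
  show "(\<Prod>i\<in>(UNIV::'n set). (if (if i = j then (1::nat) else 0) = 0 then 1 else if (if i = j then (1::nat) else 0) = (1::nat) then 0 else \<sigma>\<^sup>2)) = 0"
    by (rule prod_zero) (auto intro!: bexI[of _ j])
qed auto

lemma gm3: assumes "\<sigma> > 0" shows "has_bochner_integral (gauss_noise \<sigma>) (\<lambda>z::real^'n::finite. z $ j * z $ k) (if j = k then \<sigma>\<^sup>2 else 0)"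
proof (cases "j = k")
  case True
  then show ?thesis
  proof (intro gm_gen[OF assms, where e="\<lambda>i. if i = j then (2::nat) else 0"])
    fix z :: "real^'n"
    have "(\<Prod>i\<in>UNIV. (z $ i) ^ (if i = j then (2::nat) else 0)) = (\<Prod>i\<in>UNIV. (if i = j then z $ j * z $ k else 1))"
      by (intro prod.cong) (auto simp: True power2_eq_square)
    also have "\<dots> = z $ j * z $ k" by (simp add: prod.delta)
    finally show "(\<Prod>i\<in>UNIV. (z $ i) ^ (if i = j then (2::nat) else 0)) = z $ j * z $ k" .
    have "(\<Prod>i\<in>(UNIV::'n set). (if (if i = j then (2::nat) else 0) = 0 then 1 else if (if i = j then (2::nat) else 0) = (1::nat) then 0 else \<sigma>\<^sup>2))
      = (\<Prod>i\<in>(UNIV::'n set). (if i = j then \<sigma>\<^sup>2 else 1))"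
      by (intro prod.cong) auto
    then show "(\<Prod>i\<in>(UNIV::'n set). (if (if i = j then (2::nat) else 0) = 0 then 1 else if (if i = j then (2::nat) else 0) = (1::nat) then 0 else \<sigma>\<^sup>2)) = (if j = k then \<sigma>\<^sup>2 else 0)"
      using True by (simp add: prod.delta)
  qed auto
next
  case False
  show ?thesis
  proof (rule gm_gen[OF assms, where e="\<lambda>i. if i = j then (1::nat) else if i = k then 1 else 0"])
    fix z :: "real^'n"
    have "(\<Prod>i\<in>UNIV. (z $ i) ^ (if i = j then (1::nat) else if i = k then 1 else 0)) =
          (\<Prod>i\<in>UNIV. (if i = j then z $ j else 1) * (if i = k then z $ k else 1))"
      by (intro prod.cong) (use False in auto)
    also have "\<dots> = z $ j * z $ k" by (simp add: prod.distrib prod.delta)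
    finally show "(\<Prod>i\<in>UNIV. (z $ i) ^ (if i = j then (1::nat) else if i = k then 1 else 0)) = z $ j * z $ k" .
    show "(\<Prod>i\<in>(UNIV::'n set). (if (if i = j then (1::nat) else if i = k then 1 else 0) = 0 then 1 else if (if i = j then (1::nat) else if i = k then 1 else 0) = (1::nat) then 0 else \<sigma>\<^sup>2)) = (if j = k then \<sigma>\<^sup>2 else 0)"
      using False by (subst prod_zero) (auto intro!: bexI[of _ j])
  qed auto
qed

lemma gauss_quad:
  fixes v :: "real^'m::finite" and B :: "real^'n::finite^'m"
  assumes "\<sigma> > 0"
  shows "integral\<^sup>L (gauss_noise \<sigma>) (\<lambda>z. (norm (v + B *v z))\<^sup>2) =
         (norm v)\<^sup>2 + \<sigma>\<^sup>2 * (\<Sum>i\<in>UNIV. \<Sum>j\<in>UNIV. (B $ i $ j)\<^sup>2)"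
proof -
  have eqf: "(norm (v + B *v z))\<^sup>2 = (\<Sum>i\<in>UNIV. (v$i)\<^sup>2 * 1 + (2 * v$i) * (\<Sum>j\<in>UNIV. B$i$j * z$j)
      + (\<Sum>j\<in>UNIV. \<Sum>k\<in>UNIV. (B$i$j * B$i$k) * (z$j * z$k)))" for z
    unfolding power2_norm_eq_inner inner_vec_def
    by (intro sum.cong refl)
       (simp add: matrix_vector_mult_def power2_eq_square algebra_simps sum_distrib_left sum_distrib_right
          flip: sum.distrib)
  have hb: "has_bochner_integral (gauss_noise \<sigma>) (\<lambda>z. \<Sum>i\<in>UNIV. (v$i)\<^sup>2 * 1 + (2 * v$i) * (\<Sum>j\<in>UNIV. B$i$j * z$j)
      + (\<Sum>j\<in>UNIV. \<Sum>k\<in>UNIV. (B$i$j * B$i$k) * (z$j * z$k)))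
      (\<Sum>i\<in>UNIV. (v$i)\<^sup>2 * 1 + (2 * v$i) * (\<Sum>j\<in>UNIV. B$i$j * 0)
      + (\<Sum>j\<in>UNIV. \<Sum>k\<in>UNIV. (B$i$j * B$i$k) * (if j = k then \<sigma>\<^sup>2 else 0)))"
    by (intro has_bochner_integral_sum has_bochner_integral_add has_bochner_integral_mult_right
          gm1[OF assms] gm2[OF assms] gm3[OF assms])
  have "(\<Sum>i\<in>UNIV. (v$i)\<^sup>2 * 1 + (2 * v$i) * (\<Sum>j\<in>UNIV. B$i$j * 0)
      + (\<Sum>j\<in>UNIV. \<Sum>k\<in>UNIV. (B$i$j * B$i$k) * (if j = k then \<sigma>\<^sup>2 else 0)))
     = (norm v)\<^sup>2 + \<sigma>\<^sup>2 * (\<Sum>i\<in>UNIV. \<Sum>j\<in>UNIV. (B $ i $ j)\<^sup>2)"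
    unfolding power2_norm_eq_inner inner_vec_def
    by (simp add: if_distrib sum.delta sum.distrib sum_distrib_left power2_eq_square algebra_simps cong: if_cong)
  then show ?thesis
    using has_bochner_integral_integral_eq[OF hb] eqf by simp
qed

lemma sum_delta_l: "(\<Sum>k\<in>(UNIV::'n::finite set). (if i = k then c else 0) * f k) = (c::real) * f i"
proof -
  have "(\<Sum>k\<in>(UNIV::'n::finite set). (if i = k then c else 0) * f k) = (\<Sum>k\<in>UNIV. if k = i then c * f i else 0)"
    by (rule sum.cong) auto
  then show ?thesis by simp
qed

lemma sum_delta_r: "(\<Sum>k\<in>(UNIV::'n::finite set). f k * (if k = j then c k else 0)) = f j * (c j::real)"
proof -
  have "(\<Sum>k\<in>(UNIV::'n::finite set). f k * (if k = j then c k else 0)) = (\<Sum>k\<in>UNIV. if k = j then f j * c j else 0)"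
    by (rule sum.cong) auto
  then show ?thesis by simp
qed

lemma mdiag_mult_left: "mdiag a ** M = (\<chi> i j. a$i * M$i$j)"
  by (simp add: mdiag_def matrix_matrix_mult_def vec_eq_iff sum_delta_l)

lemma mdiag_mult_right: "M ** mdiag a = (\<chi> i j. M$i$j * a$j)"
  by (simp add: mdiag_def matrix_matrix_mult_def vec_eq_iff sum_delta_r)

lemma mdiag_mult: "mdiag a ** mdiag b = mdiag (\<chi> i. a$i * b$i)"
  by (simp add: mdiag_mult_left) (simp add: mdiag_def vec_eq_iff)

lemma mdiag_one: "mdiag (\<chi> i. 1) = mat 1"
  by (simp add: mdiag_def mat_def vec_eq_iff)

lemma transpose_mdiag: "transpose (mdiag a) = mdiag a"
  by (simp add: mdiag_def transpose_def vec_eq_iff)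

lemma mdiag_vec: "mdiag a *v x = (\<chi> i. a$i * x$i)"
  by (simp add: mdiag_def matrix_vector_mult_def vec_eq_iff sum_delta_l)

lemma mdiag_diff: "mdiag a - mdiag b = mdiag (\<chi> i. a$i - b$i)"
  by (simp add: mdiag_def vec_eq_iff)

lemma mdiag_cong: "(\<And>i. a$i = b$i) \<Longrightarrow> mdiag a = mdiag b"
  by (simp add: vec_eq_iff mdiag_def)

lemma inner_mat_transpose: "x \<bullet> (U *v w) = (transpose U *v x) \<bullet> (w::real^'n)"
  by (simp add: dot_lmul_matrix[symmetric])

lemma norm_orth:
  assumes "orthogonal_matrix (U::real^'n^'n)" shows "norm (U *v x) = norm x"
proof -
  have "(U *v x) \<bullet> (U *v x) = x \<bullet> x"
    using assms by (simp add: inner_mat_transpose[of "U *v x"] matrix_vector_mul_assoc orthogonal_matrix)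
  then show ?thesis by (simp add: norm_eq_sqrt_inner)
qed

lemma norm_sq_sum: "(norm (x::real^'n))\<^sup>2 = (\<Sum>i\<in>UNIV. (x$i)\<^sup>2)"
  unfolding power2_norm_eq_inner inner_vec_def by (simp add: power2_eq_square)

lemma inner_mdiag: "y \<bullet> (mdiag a *v y) = (\<Sum>i\<in>UNIV. a$i * (y$i)\<^sup>2)"
  by (simp add: mdiag_vec inner_vec_def power2_eq_square mult_ac)

definition odiag :: "real^'n^'n \<Rightarrow> real^'n \<Rightarrow> real^'n^'n" where
  "odiag U a = U ** mdiag a ** transpose U"

lemma odiag_mult:
  assumes "orthogonal_matrix U"
  shows "odiag U a ** odiag U b = odiag U (\<chi> i. a$i * b$i)"
proof -
  have "odiag U a ** odiag U b = U ** mdiag a ** (transpose U ** U) ** mdiag b ** transpose U"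
    by (simp add: odiag_def matrix_mul_assoc)
  also have "\<dots> = odiag U (\<chi> i. a$i * b$i)"
    using assms by (simp add: orthogonal_matrix odiag_def mdiag_mult flip: matrix_mul_assoc)
  finally show ?thesis .
qed

lemma odiag_one: "orthogonal_matrix U \<Longrightarrow> odiag U (\<chi> i. 1) = mat 1"
  by (simp add: odiag_def mdiag_one orthogonal_matrix_def)

lemma odiag_transpose: "transpose (odiag U a) = odiag U a"
  by (simp add: odiag_def matrix_transpose_mul transpose_mdiag matrix_mul_assoc)

lemma odiag_inner: "x \<bullet> (odiag U a *v x) = (\<Sum>i\<in>UNIV. a$i * ((transpose U *v x)$i)\<^sup>2)"
  by (simp add: odiag_def flip: matrix_vector_mul_assoc)
     (simp add: inner_mat_transpose[of x U] inner_mdiag)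

lemma matrix_inv_eq:
  fixes A B :: "real^'n^'n"
  assumes "A ** B = mat 1" "B ** A = mat 1"
  shows "matrix_inv A = B"
proof -
  have ex: "\<exists>A'. A ** A' = mat 1 \<and> A' ** A = mat 1" using assms by blast
  define A' where "A' = matrix_inv A"
  have h: "A ** A' = mat 1 \<and> A' ** A = mat 1"
    unfolding A'_def matrix_inv_def by (rule someI_ex[OF ex])
  have "A' = A' ** (A ** B)" using assms by simp
  also have "\<dots> = (A' ** A) ** B" by (simp add: matrix_mul_assoc)
  also have "\<dots> = B" using h by simp
  finally show ?thesis unfolding A'_def .
qed

lemma odiag_inv:
  assumes "orthogonal_matrix U" "\<And>i. a$i \<noteq> 0"
  shows "matrix_inv (odiag U a) = odiag U (\<chi> i. 1 / a$i)"
proof (rule matrix_inv_eq)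
  have e1: "(\<chi> i. a$i * (\<chi> i. 1 / a$i)$i) = (\<chi> i. 1)" and e2: "(\<chi> i. (\<chi> i. 1 / a$i)$i * a$i) = (\<chi> i. 1)"
    using assms(2) by (simp_all add: vec_eq_iff)
  show "odiag U a ** odiag U (\<chi> i. 1 / a$i) = mat 1"
    by (simp only: odiag_mult[OF assms(1)] e1 odiag_one[OF assms(1)])
  show "odiag U (\<chi> i. 1 / a$i) ** odiag U a = mat 1"
    by (simp only: odiag_mult[OF assms(1)] e2 odiag_one[OF assms(1)])
qed

lemma msqrt_odiag:
  fixes U :: "real^'n^'n" and t :: "real^'n"
  assumes U: "orthogonal_matrix U" and t: "\<And>i. t$i > 0"
  shows "msqrt (odiag U t) = odiag U (\<chi> i. sqrt (t$i))"
    and "\<And>x. x \<noteq> 0 \<Longrightarrow> x \<bullet> (odiag U (\<chi> i. sqrt (t$i)) *v x) > 0"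
proof -
  define st where "st = (\<chi> i. sqrt (t$i))"
  define C where "C = odiag U st"
  have UtU: "transpose U ** U = mat 1" and UUt: "U ** transpose U = mat 1"
    using U by (auto simp: orthogonal_matrix_def)
  have CC: "C ** C = odiag U t"
    unfolding C_def odiag_mult[OF U]
    by (rule arg_cong[where f="odiag U"]) (use t in \<open>simp add: vec_eq_iff st_def less_imp_le\<close>)
  have Cpos: "x \<bullet> (C *v x) > 0" if "x \<noteq> 0" for x
  proof -
    have "transpose U *v x \<noteq> 0"
      using norm_orth[of "transpose U" x] U that by auto
    then obtain i where i: "(transpose U *v x) $ i \<noteq> 0" by (auto simp: vec_eq_iff)
    have "0 < (\<Sum>j\<in>UNIV. st$j * ((transpose U *v x)$j)\<^sup>2)"
      by (rule sum_pos2[where i=i]) (use i t in \<open>auto simp: st_def less_imp_le intro!: mult_nonneg_nonneg\<close>)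
    then show ?thesis unfolding C_def odiag_inner .
  qed
  then show "\<And>x. x \<noteq> 0 \<Longrightarrow> x \<bullet> (odiag U (\<chi> i. sqrt (t$i)) *v x) > 0"
    unfolding C_def st_def .
  have psdC: "pos_semidef C"
    unfolding pos_semidef_def
  proof
    show "transpose C = C" unfolding C_def by (rule odiag_transpose)
    show "\<forall>x. 0 \<le> x \<bullet> (C *v x)"
    proof
      fix x show "0 \<le> x \<bullet> (C *v x)" using Cpos[of x] by (cases "x = 0") auto
    qed
  qed
  have uniq: "B = C" if B: "pos_semidef B" "B ** B = odiag U t" for B
  proof -
    define B' where "B' = transpose U ** B ** U"
    have Beq: "B = U ** B' ** transpose U"
      by (simp add: B'_def matrix_mul_assoc UUt) (simp add: UUt flip: matrix_mul_assoc)
    have "B' ** B' = transpose U ** (B ** (U ** transpose U) ** B) ** U"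
      by (simp add: B'_def matrix_mul_assoc)
    also have "\<dots> = transpose U ** U ** mdiag t ** (transpose U ** U)"
      using B(2) by (simp add: UUt odiag_def matrix_mul_assoc)
    also have "\<dots> = mdiag t" by (simp add: UtU)
    finally have B'2: "B' ** B' = mdiag t" .
    have "B' ** mdiag t = mdiag t ** B'"
      unfolding B'2[symmetric] by (simp add: matrix_mul_assoc)
    then have comm: "B'$i$j * t$j = t$i * B'$i$j" for i j
      unfolding mdiag_mult_left mdiag_mult_right vec_eq_iff by simp
    have comm2: "B'$i$j * st$j = st$i * B'$i$j" for i j
    proof (cases "B'$i$j = 0")
      case False
      then have "t$j = t$i" using comm[of i j] by simp
      then show ?thesis by (simp add: st_def)
    qed simp
    have BD: "B' ** mdiag st = mdiag st ** B'"
      unfolding mdiag_mult_left mdiag_mult_right by (simp add: vec_eq_iff comm2)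
    have BC: "B ** C = C ** B"
    proof -
      have "B ** C = U ** (B' ** (transpose U ** U) ** mdiag st) ** transpose U"
        by (simp add: Beq C_def odiag_def matrix_mul_assoc)
      also have "\<dots> = U ** (mdiag st ** (transpose U ** U) ** B') ** transpose U"
        by (simp add: UtU BD)
      also have "\<dots> = C ** B"
        by (simp add: Beq C_def odiag_def matrix_mul_assoc)
      finally show ?thesis .
    qed
    have "B *v x = C *v x" for x
    proof -
      define y where "y = B *v x - C *v x"
      have "B *v y + C *v y = (B ** B) *v x - (B ** C) *v x + (C ** B) *v x - (C ** C) *v x"
        by (simp add: y_def matrix_vector_mult_diff_distrib matrix_vector_mul_assoc)
      also have "\<dots> = 0" by (simp add: B(2) CC BC)
      finally have "y \<bullet> (B *v y) + y \<bullet> (C *v y) = 0"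
        by (simp flip: inner_add_right)
      moreover have "y \<bullet> (B *v y) \<ge> 0" using B(1) by (simp add: pos_semidef_def)
      ultimately have "\<not> y \<bullet> (C *v y) > 0" by linarith
      then have "y = 0" using Cpos by blast
      then show ?thesis by (simp add: y_def)
    qed
    then show "B = C" by (simp add: matrix_eq)
  qed
  show "msqrt (odiag U t) = odiag U (\<chi> i. sqrt (t$i))"
    unfolding msqrt_def C_def[symmetric, unfolded st_def]
  proof (rule the_equality)
    show "pos_semidef C \<and> C ** C = odiag U t" using psdC CC by simp
    show "\<And>B. pos_semidef B \<and> B ** B = odiag U t \<Longrightarrow> B = C" using uniq by blast
  qed
qed

definition fro :: "real^'m^'k \<Rightarrow> real" where
  "fro B = (\<Sum>i\<in>UNIV. \<Sum>j\<in>UNIV. (B $ i $ j)\<^sup>2)"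

lemma risk_eq:
  assumes "\<sigma> > 0"
  shows "lin_risk \<sigma> X A ST \<beta> = (norm (msqrt ST *v (A *v (X *v \<beta>) - \<beta>)))\<^sup>2 + \<sigma>\<^sup>2 * fro (msqrt ST ** A)"
proof -
  have "msqrt ST *v (A *v (X *v \<beta> + z) - \<beta>) = msqrt ST *v (A *v (X *v \<beta>) - \<beta>) + (msqrt ST ** A) *v z" for z
    by (simp add: matrix_vector_right_distrib matrix_vector_mult_diff_distrib matrix_vector_mul_assoc algebra_simps)
  then have eq: "(\<lambda>z. (norm (msqrt ST *v (A *v (X *v \<beta> + z) - \<beta>)))\<^sup>2) =
     (\<lambda>z. (norm (msqrt ST *v (A *v (X *v \<beta>) - \<beta>) + (msqrt ST ** A) *v z))\<^sup>2)"
    by presburger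
  show ?thesis
    unfolding lin_risk_def fro_def eq by (rule gauss_quad[OF assms])
qed

lemma fro_cols: "fro B = (\<Sum>j\<in>UNIV. (norm (B *v axis j 1))\<^sup>2)"
proof -
  have "(\<Sum>j\<in>UNIV. (norm (B *v axis j 1))\<^sup>2) = (\<Sum>j\<in>UNIV. \<Sum>i\<in>UNIV. (B$i$j)\<^sup>2)"
    unfolding norm_sq_sum matrix_vector_mult_basis column_def by simp
  also have "\<dots> = fro B" unfolding fro_def by (rule sum.swap)
  finally show ?thesis ..
qed

lemma fro_orth: "orthogonal_matrix U \<Longrightarrow> fro (U ** B) = fro B"
  unfolding fro_cols by (simp add: norm_orth flip: matrix_vector_mul_assoc)

lemma fro_mdiag: "fro (mdiag w ** N) = (\<Sum>i\<in>UNIV. (w$i)\<^sup>2 * (\<Sum>k\<in>UNIV. (N$i$k)\<^sup>2))"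
  unfolding fro_def mdiag_mult_left by (simp add: power_mult_distrib sum_distrib_left)

lemma scalar_lb:
  fixes t s \<sigma> lam nn a c \<tau> :: real
  assumes t: "t > 0" and s: "s > 0" and \<sigma>: "\<sigma> > 0" and lam: "lam > 0" and nn: "nn > 0"
    and ac: "c\<^sup>2 \<le> a * (nn * s)"
    and \<tau>: "\<tau> = \<sigma>\<^sup>2 / (nn * s) * max 0 (sqrt t / lam - 1)"
  shows "\<sigma>\<^sup>2 / nn * (t / s) * max 0 (1 - lam / sqrt t) \<le> \<tau> * t * (c - 1)\<^sup>2 + \<sigma>\<^sup>2 * t * a"
proof -
  define k where "k = \<sigma>\<^sup>2 / (nn * s)"
  have k: "k > 0" using \<sigma> nn s by (simp add: k_def)
  have \<tau>0: "\<tau> \<ge> 0" using \<tau> k by (simp add: k_def[symmetric])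
  have kk: "k * (nn * s) = \<sigma>\<^sup>2" using nn s by (simp add: k_def)
  have h1: "k * c\<^sup>2 \<le> \<sigma>\<^sup>2 * a"
  proof -
    have "k * c\<^sup>2 \<le> k * (a * (nn * s))" using ac k by (simp add: mult_left_mono)
    also have "\<dots> = \<sigma>\<^sup>2 * a" using kk by (simp add: algebra_simps)
    finally show ?thesis .
  qed
  have h2: "t * (\<tau> * (c - 1)\<^sup>2 + k * c\<^sup>2) \<le> \<tau> * t * (c - 1)\<^sup>2 + \<sigma>\<^sup>2 * t * a"
    using mult_left_mono[OF h1, of t] t by (simp add: algebra_simps)
  have idt: "(\<tau> + k) * (\<tau> * (c - 1)\<^sup>2 + k * c\<^sup>2) - \<tau> * k = (\<tau> * (c - 1) + k * c)\<^sup>2"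
    by (simp add: power2_eq_square algebra_simps)
  have "\<tau> * k \<le> (\<tau> + k) * (\<tau> * (c - 1)\<^sup>2 + k * c\<^sup>2)"
    using idt by (smt (verit) zero_le_power2)
  then have h3: "\<tau> * k / (\<tau> + k) \<le> \<tau> * (c - 1)\<^sup>2 + k * c\<^sup>2"
    using \<tau>0 k by (simp add: divide_le_eq mult.commute)
  have h4: "\<sigma>\<^sup>2 / nn * (t / s) * max 0 (1 - lam / sqrt t) = t * (\<tau> * k / (\<tau> + k))"
  proof (cases "sqrt t \<le> lam")
    case True
    then have "sqrt t / lam - 1 \<le> 0" "1 - lam / sqrt t \<le> 0" using lam t
      by (simp_all add: divide_le_eq le_divide_eq)
    then show ?thesis using \<tau> by simp
  next
    case False
    then have st: "sqrt t > lam" by simp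
    have sq: "sqrt t > 0" using t by simp
    have e1: "\<tau> = k * (sqrt t / lam - 1)" using \<tau> st lam by (simp add: k_def field_simps)
    have e2: "\<tau> + k = k * sqrt t / lam" using e1 lam by (simp add: field_simps)
    have "t * (\<tau> * k / (\<tau> + k)) = t * k * (1 - lam / sqrt t)"
      unfolding e2 e1 using k lam sq by (simp add: field_simps)
    moreover have "1 - lam / sqrt t > 0" using st sq by (simp add: field_simps)
    ultimately show ?thesis using nn s by (simp add: k_def field_simps)
  qed
  have "t * (\<tau> * k / (\<tau> + k)) \<le> t * (\<tau> * (c - 1)\<^sup>2 + k * c\<^sup>2)"
    by (rule mult_left_mono[OF h3]) (use t in simp)
  then show ?thesis using h2 h4 by linarith
qed

lemma scalar_ub:
  fixes t s \<sigma> lam nn :: real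
  assumes t: "t > 0" and s: "s > 0" and lam: "lam > 0" and nn: "nn > 0"
  shows "lam\<^sup>2 * ((\<sigma>\<^sup>2 / nn) * ((1 / s) * max 0 (sqrt t / lam - 1))) + \<sigma>\<^sup>2 * (t * (max 0 (1 - lam / sqrt t))\<^sup>2 * (1 / (nn * s)))
         = \<sigma>\<^sup>2 / nn * (t / s) * max 0 (1 - lam / sqrt t)"
    and "t * (max 0 (1 - lam / sqrt t) - 1)\<^sup>2 \<le> lam\<^sup>2"
proof -
  have sq: "sqrt t > 0" using t by simp
  have tt: "sqrt t * sqrt t = t" using t by simp
  show "lam\<^sup>2 * ((\<sigma>\<^sup>2 / nn) * ((1 / s) * max 0 (sqrt t / lam - 1))) + \<sigma>\<^sup>2 * (t * (max 0 (1 - lam / sqrt t))\<^sup>2 * (1 / (nn * s)))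
         = \<sigma>\<^sup>2 / nn * (t / s) * max 0 (1 - lam / sqrt t)"
  proof (cases "sqrt t \<le> lam")
    case True
    then have "sqrt t / lam - 1 \<le> 0" "1 - lam / sqrt t \<le> 0" using lam t
      by (simp_all add: divide_le_eq le_divide_eq)
    then show ?thesis by simp
  next
    case False
    then have "sqrt t / lam - 1 > 0" "1 - lam / sqrt t > 0" using lam sq
      by (simp_all add: field_simps)
    then have m: "max 0 (sqrt t / lam - 1) = sqrt t / lam - 1" "max 0 (1 - lam / sqrt t) = 1 - lam / sqrt t"
      by simp_all
    define a where "a = sqrt t"
    have ta: "t = a\<^sup>2" using tt by (simp add: a_def power2_eq_square)
    have a0: "a > 0" using sq by (simp add: a_def)
    have q1: "lam\<^sup>2 * (a / lam - 1) = lam * a - lam\<^sup>2" using lam by (simp add: field_simps power2_eq_square)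
    have q2: "a\<^sup>2 * (1 - lam / a)\<^sup>2 = (a - lam)\<^sup>2" using a0 by (simp add: field_simps power2_eq_square)
    have q3: "a\<^sup>2 * (1 - lam / a) = a\<^sup>2 - lam * a" using a0 by (simp add: field_simps power2_eq_square)
    have "lam\<^sup>2 * ((\<sigma>\<^sup>2 / nn) * ((1 / s) * (a / lam - 1))) + \<sigma>\<^sup>2 * (t * (1 - lam / a)\<^sup>2 * (1 / (nn * s)))
        = (\<sigma>\<^sup>2 / (nn * s)) * (lam\<^sup>2 * (a / lam - 1) + a\<^sup>2 * (1 - lam / a)\<^sup>2)"
      by (simp add: ta algebra_simps)
    also have "\<dots> = (\<sigma>\<^sup>2 / (nn * s)) * (a\<^sup>2 * (1 - lam / a))"
      unfolding q1 q2 q3 by (simp add: power2_eq_square algebra_simps)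
    also have "\<dots> = \<sigma>\<^sup>2 / nn * (t / s) * (1 - lam / a)"
      by (simp add: ta)
    finally have calc: "lam\<^sup>2 * ((\<sigma>\<^sup>2 / nn) * ((1 / s) * (a / lam - 1))) + \<sigma>\<^sup>2 * (t * (1 - lam / a)\<^sup>2 * (1 / (nn * s)))
       = \<sigma>\<^sup>2 / nn * (t / s) * (1 - lam / a)" .
    show ?thesis unfolding m using calc by (simp only: a_def)
  qed
  show "t * (max 0 (1 - lam / sqrt t) - 1)\<^sup>2 \<le> lam\<^sup>2"
  proof (cases "sqrt t \<le> lam")
    case True
    then have "1 - lam / sqrt t \<le> 0" using lam t by (simp add: le_divide_eq)
    then have "t * (max 0 (1 - lam / sqrt t) - 1)\<^sup>2 = sqrt t ^ 2" using t by simp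
    also have "\<dots> \<le> lam\<^sup>2" using power_mono[OF True, of 2] sq by (simp only: less_imp_le)
    finally show ?thesis .
  next
    case False
    then have "1 - lam / sqrt t > 0" using lam sq by (simp add: field_simps)
    then have "t * (max 0 (1 - lam / sqrt t) - 1)\<^sup>2 = sqrt t ^ 2 * (lam / sqrt t)\<^sup>2" using t by simp
    also have "\<dots> = lam\<^sup>2" using sq by (simp add: field_simps)
    finally show ?thesis by simp
  qed
qed

lemma lower_bound:
  fixes X :: "real^'d^'n" and A :: "real^'n^'d" and U :: "real^'d^'d" and t s :: "real^'d"
  assumes \<sigma>: "\<sigma> > 0" and r: "r > 0" and U: "orthogonal_matrix U"
    and t: "\<And>i. t$i > 0" and s: "\<And>i. s$i > 0"
    and XX: "(1 / real CARD('n)) *\<^sub>R (transpose X ** X) = odiag U s"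
    and lam: "lam > 0"
    and cond: "(\<sigma>\<^sup>2 / real CARD('n)) * (\<Sum>i\<in>UNIV. (1 / s $ i) * max 0 (sqrt (t $ i) / lam - 1)) = r\<^sup>2"
  shows "(\<Sum>i\<in>UNIV. (\<sigma>\<^sup>2 / real CARD('n)) * (t $ i / s $ i) * max 0 (1 - lam / sqrt (t $ i)))
          \<le> (SUP \<beta> \<in> cball 0 r. lin_risk \<sigma> X A (odiag U t) \<beta>)"
proof -
  define nn where "nn = real CARD('n)"
  have nn: "nn > 0" by (simp add: nn_def)
  define st where "st = (\<chi> i. sqrt (t$i))"
  define C where "C = odiag U st"
  have UtU: "transpose U ** U = mat 1" and UUt: "U ** transpose U = mat 1"
    using U by (auto simp: orthogonal_matrix_def)
  have msq: "msqrt (odiag U t) = C"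
    unfolding C_def st_def by (rule msqrt_odiag(1)[OF U t])
  define M where "M = C ** (A ** X - mat 1)"
  have Mv: "C *v (A *v (X *v \<beta>) - \<beta>) = M *v \<beta>" for \<beta>
    by (simp add: M_def matrix_vector_mult_diff_rdistrib matrix_vector_mul_assoc flip: matrix_vector_mul_assoc)
  define V where "V = fro (C ** A)"
  define R where "R \<beta> = lin_risk \<sigma> X A (odiag U t) \<beta>" for \<beta>
  have Req: "R \<beta> = (norm (M *v \<beta>))\<^sup>2 + \<sigma>\<^sup>2 * V" for \<beta>
    unfolding R_def risk_eq[OF \<sigma>] msq Mv V_def ..
  have bdd: "bdd_above (R ` cball 0 r)"
  proof (rule bdd_aboveI2)
    fix \<beta> :: "real^'d" assume "\<beta> \<in> cball 0 r"
    then have nb: "norm \<beta> \<le> r" by simp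
    have "norm (M *v \<beta>) \<le> onorm ((*v) M) * norm \<beta>"
      by (rule onorm) simp
    also have "\<dots> \<le> onorm ((*v) M) * r"
      by (rule mult_left_mono[OF nb]) (simp add: onorm_pos_le)
    finally have "(norm (M *v \<beta>))\<^sup>2 \<le> (onorm ((*v) M) * r)\<^sup>2"
      by (simp add: power_mono)
    then show "R \<beta> \<le> (onorm ((*v) M) * r)\<^sup>2 + \<sigma>\<^sup>2 * V" unfolding Req by simp
  qed
  define \<tau> where "\<tau> j = \<sigma>\<^sup>2 / (nn * s$j) * max 0 (sqrt (t$j) / lam - 1)" for j
  have \<tau>0: "\<tau> j \<ge> 0" for j using s[of j] nn by (simp add: \<tau>_def)
  have sum\<tau>: "(\<Sum>j\<in>UNIV. \<tau> j) = r\<^sup>2"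
    unfolding cond[symmetric] \<tau>_def nn_def sum_distrib_left by (intro sum.cong) auto
  define u where "u j = U *v axis j 1" for j
  have nu: "norm (u j) = 1" for j unfolding u_def by (simp add: norm_orth[OF U])
  have inb: "r *\<^sub>R u j \<in> cball 0 r" for j using r by (simp add: nu)
  have Rj: "R (r *\<^sub>R u j) = r\<^sup>2 * (norm (M *v u j))\<^sup>2 + \<sigma>\<^sup>2 * V" for j
    unfolding Req by (simp add: matrix_vector_mult_scaleR power_mult_distrib)
  define S where "S = (SUP \<beta> \<in> cball 0 r. R \<beta>)"
  have SR: "R (r *\<^sub>R u j) \<le> S" for j
    unfolding S_def by (rule cSUP_upper[OF inb bdd])
  have w1: "(\<Sum>j\<in>UNIV. \<tau> j / r\<^sup>2) = 1"
    using r by (simp add: sum\<tau> flip: sum_divide_distrib)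
  have "(\<Sum>j\<in>UNIV. \<tau> j * (norm (M *v u j))\<^sup>2) + \<sigma>\<^sup>2 * V = (\<Sum>j\<in>UNIV. (\<tau> j / r\<^sup>2) * R (r *\<^sub>R u j))"
  proof -
    have e: "(\<tau> j / r\<^sup>2) * R (r *\<^sub>R u j) = \<tau> j * (norm (M *v u j))\<^sup>2 + (\<tau> j / r\<^sup>2) * (\<sigma>\<^sup>2 * V)" for j
      unfolding Rj using r by (simp add: field_simps)
    have "(\<Sum>j\<in>UNIV. (\<tau> j / r\<^sup>2) * (\<sigma>\<^sup>2 * V)) = \<sigma>\<^sup>2 * V"
      by (subst sum_distrib_right[symmetric]) (simp only: w1 mult_1)
    then show ?thesis unfolding e sum.distrib by simp
  qed
  also have "\<dots> \<le> (\<Sum>j\<in>UNIV. (\<tau> j / r\<^sup>2) * S)"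
    by (intro sum_mono mult_left_mono SR) (use \<tau>0 in simp)
  also have "\<dots> = S" by (subst sum_distrib_right[symmetric]) (simp only: w1 mult_1)
  finally have Sge: "(\<Sum>j\<in>UNIV. \<tau> j * (norm (M *v u j))\<^sup>2) + \<sigma>\<^sup>2 * V \<le> S" .
  define A' where "A' = transpose U ** A"
  define XU where "XU = X ** U"
  define G where "G = A' ** XU"
  have UtC: "transpose U ** C = mdiag st ** transpose U"
    by (simp add: C_def odiag_def matrix_mul_assoc UtU)
  have K1: "t$j * (G$j$j - 1)\<^sup>2 \<le> (norm (M *v u j))\<^sup>2" for j
  proof -
    have "transpose U *v (M *v u j) = mdiag st *v (G *v axis j 1 - axis j 1)"
    proof -
      have "transpose U *v (M *v u j) = (transpose U ** C) *v (A *v (X *v u j) - u j)"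
        by (simp add: Mv[symmetric] matrix_vector_mul_assoc)
      also have "\<dots> = mdiag st *v (transpose U *v (A *v (X *v u j)) - transpose U *v u j)"
        by (simp add: UtC matrix_vector_mult_diff_distrib flip: matrix_vector_mul_assoc)
      also have "\<dots> = mdiag st *v (G *v axis j 1 - axis j 1)"
        by (simp add: u_def G_def A'_def XU_def matrix_vector_mul_assoc matrix_mul_assoc UtU)
      finally show ?thesis .
    qed
    then have "(transpose U *v (M *v u j)) $ j = st$j * (G$j$j - 1)"
      by (simp add: mdiag_vec matrix_vector_mult_basis column_def)
    then have "\<bar>st$j * (G$j$j - 1)\<bar> \<le> norm (M *v u j)"
      using component_le_norm_cart[of "transpose U *v (M *v u j)" j] norm_orth[of "transpose U"] U by simp
    then have "(st$j * (G$j$j - 1))\<^sup>2 \<le> (norm (M *v u j))\<^sup>2"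
      by (metis abs_ge_zero power2_abs power_mono)
    then show ?thesis using t[of j] by (simp add: st_def power_mult_distrib less_imp_le)
  qed
  have K2: "V = (\<Sum>i\<in>UNIV. t$i * (\<Sum>k\<in>UNIV. (A'$i$k)\<^sup>2))"
  proof -
    have "V = fro (transpose U ** (C ** A))" unfolding V_def by (simp add: fro_orth U)
    also have "\<dots> = fro (mdiag st ** A')"
      by (simp add: A'_def matrix_mul_assoc UtC)
    also have "\<dots> = (\<Sum>i\<in>UNIV. t$i * (\<Sum>k\<in>UNIV. (A'$i$k)\<^sup>2))"
      unfolding fro_mdiag using t by (simp add: st_def less_imp_le)
    finally show ?thesis .
  qed
  have K4: "(\<Sum>k\<in>UNIV. (XU$k$j)\<^sup>2) = nn * s$j" for j
  proof -
    have "transpose XU ** XU = transpose U ** (transpose X ** X) ** U"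
      by (simp add: XU_def matrix_transpose_mul matrix_mul_assoc)
    also have "transpose X ** X = nn *\<^sub>R odiag U s"
      using arg_cong[OF XX, of "\<lambda>B. nn *\<^sub>R B"] nn by (simp add: nn_def)
    also have "transpose U ** (nn *\<^sub>R odiag U s) ** U = nn *\<^sub>R mdiag s"
      by (simp add: odiag_def matrix_scalar_ac matrix_mul_assoc UtU flip: scalar_matrix_assoc)
         (simp add: UtU flip: matrix_mul_assoc)
    finally have "(transpose XU ** XU)$j$j = nn * s$j" by (simp add: mdiag_def)
    then show ?thesis by (simp add: matrix_matrix_mult_def transpose_def power2_eq_square)
  qed
  have K3: "(G$j$j)\<^sup>2 \<le> (\<Sum>k\<in>UNIV. (A'$j$k)\<^sup>2) * (nn * s$j)" for j
  proof -
    have "G$j$j = (A'$j) \<bullet> (column j XU)"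
      by (simp add: G_def matrix_matrix_mult_def inner_vec_def column_def)
    moreover have "(A'$j) \<bullet> (A'$j) = (\<Sum>k\<in>UNIV. (A'$j$k)\<^sup>2)"
      by (simp add: inner_vec_def power2_eq_square)
    moreover have "(column j XU) \<bullet> (column j XU) = nn * s$j"
      using K4[of j] by (simp add: inner_vec_def column_def power2_eq_square)
    ultimately show ?thesis using Cauchy_Schwarz_ineq[of "A'$j" "column j XU"] by simp
  qed
  have per: "(\<sigma>\<^sup>2 / nn) * (t$j / s$j) * max 0 (1 - lam / sqrt (t$j))
       \<le> \<tau> j * t$j * (G$j$j - 1)\<^sup>2 + \<sigma>\<^sup>2 * t$j * (\<Sum>k\<in>UNIV. (A'$j$k)\<^sup>2)" for j
    by (rule scalar_lb[OF t s \<sigma> lam nn K3]) (simp add: \<tau>_def)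
  have "(\<Sum>i\<in>UNIV. (\<sigma>\<^sup>2 / nn) * (t $ i / s $ i) * max 0 (1 - lam / sqrt (t $ i)))
      \<le> (\<Sum>j\<in>UNIV. \<tau> j * t$j * (G$j$j - 1)\<^sup>2 + \<sigma>\<^sup>2 * t$j * (\<Sum>k\<in>UNIV. (A'$j$k)\<^sup>2))"
    by (rule sum_mono) (rule per)
  also have "\<dots> = (\<Sum>j\<in>UNIV. \<tau> j * (t$j * (G$j$j - 1)\<^sup>2)) + \<sigma>\<^sup>2 * V"
    by (simp add: K2 sum.distrib sum_distrib_left mult_ac)
  also have "\<dots> \<le> (\<Sum>j\<in>UNIV. \<tau> j * (norm (M *v u j))\<^sup>2) + \<sigma>\<^sup>2 * V"
    by (simp add: sum_mono mult_left_mono K1 \<tau>0)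
  also have "\<dots> \<le> S" by (rule Sge)
  finally show ?thesis unfolding S_def R_def nn_def .
qed

lemma orth_cancel:
  assumes "orthogonal_matrix (U::real^'n^'n)"
  shows "B ** transpose U ** U = B" and "B ** U ** transpose U = B"
  using assms by (simp_all add: orthogonal_matrix_def flip: matrix_mul_assoc)

lemma upper_bound:
  fixes X :: "real^'d^'n" and U :: "real^'d^'d" and t s :: "real^'d" and \<beta> :: "real^'d"
  assumes \<sigma>: "\<sigma> > 0" and r: "r > 0" and U: "orthogonal_matrix U"
    and t: "\<And>i. t$i > 0" and s: "\<And>i. s$i > 0"
    and XX: "(1 / real CARD('n)) *\<^sub>R (transpose X ** X) = odiag U s"
    and lam: "lam > 0"
    and cond: "(\<sigma>\<^sup>2 / real CARD('n)) * (\<Sum>i\<in>UNIV. (1 / s $ i) * max 0 (sqrt (t $ i) / lam - 1)) = r\<^sup>2"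
    and \<beta>: "norm \<beta> \<le> r"
  shows "lin_risk \<sigma> X (matrix_inv (msqrt (odiag U t)) ** U
                     ** mdiag (\<chi> i. max 0 (1 - lam / sqrt (t $ i)))
                     ** transpose U ** msqrt (odiag U t) **
                 ((1 / real CARD('n)) *\<^sub>R (matrix_inv ((1 / real CARD('n)) *\<^sub>R (transpose X ** X)) ** transpose X)))
            (odiag U t) \<beta>
         \<le> (\<Sum>i\<in>UNIV. (\<sigma>\<^sup>2 / real CARD('n)) * (t $ i / s $ i) * max 0 (1 - lam / sqrt (t $ i)))"
proof -
  define nn where "nn = real CARD('n)"
  have nn: "nn > 0" by (simp add: nn_def)
  have tnz: "t$i \<noteq> 0" and tge: "t$i \<ge> 0" and snz: "s$i \<noteq> 0" and sge: "s$i \<ge> 0" for i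
    using t[of i] s[of i] by simp_all
  define st where "st = (\<chi> i. sqrt (t$i))"
  define ist where "ist = (\<chi> i. 1 / sqrt (t$i))"
  define is' where "is' = (\<chi> i. 1 / s$i)"
  define p where "p = (\<chi> i. max 0 (1 - lam / sqrt (t $ i)))"
  define C where "C = odiag U st"
  have UtU: "transpose U ** U = mat 1" and UUt: "U ** transpose U = mat 1"
    using U by (auto simp: orthogonal_matrix_def)
  note oc = orth_cancel[OF U]
  have msq: "msqrt (odiag U t) = C"
    unfolding C_def st_def by (rule msqrt_odiag(1)[OF U t])
  have Ci: "matrix_inv C = odiag U ist"
  proof -
    have stnz: "st$i \<noteq> 0" for i using t[of i] unfolding st_def by simp
    show ?thesis unfolding C_def ist_def by (subst odiag_inv[OF U stnz]) (simp add: st_def)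
  qed
  have Si: "matrix_inv ((1 / nn) *\<^sub>R (transpose X ** X)) = odiag U is'"
  proof -
    have snz: "s$i \<noteq> 0" for i using s[of i] by simp
    show ?thesis unfolding XX[folded nn_def] is'_def by (rule odiag_inv[OF U snz])
  qed
  define ASS where "ASS = (1 / nn) *\<^sub>R (odiag U is' ** transpose X)"
  define AMM where "AMM = odiag U ist ** U ** mdiag p ** transpose U ** C ** ASS"
  have AMM_eq: "AMM = odiag U p ** ASS"
  proof -
    have "AMM = U ** (mdiag ist ** mdiag p ** mdiag st) ** transpose U ** ASS"
      by (simp add: AMM_def odiag_def C_def matrix_mul_assoc oc)
    also have "mdiag ist ** mdiag p ** mdiag st = mdiag p"
      unfolding mdiag_mult by (intro mdiag_cong) (simp add: ist_def st_def tnz tge)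
    finally show ?thesis by (simp add: odiag_def)
  qed
  have SS: "(1 / nn) *\<^sub>R (transpose X ** X) = odiag U s" using XX by (simp add: nn_def)
  have is's: "odiag U is' ** odiag U s = mat 1"
  proof -
    have "(\<chi> i. is'$i * s$i) = (\<chi> i. 1)" by (simp add: vec_eq_iff is'_def snz)
    then show ?thesis unfolding odiag_mult[OF U] by (simp add: odiag_one[OF U])
  qed
  have ASSX: "ASS ** X = mat 1"
  proof -
    have "ASS ** X = odiag U is' ** ((1 / nn) *\<^sub>R (transpose X ** X))"
      by (simp add: ASS_def matrix_scalar_ac scalar_matrix_assoc matrix_mul_assoc)
    then show ?thesis by (simp add: SS is's)
  qed
  have ASST: "ASS ** transpose ASS = (1 / nn) *\<^sub>R odiag U is'"
  proof -
    have "ASS ** transpose ASS = (1 / nn) *\<^sub>R (odiag U is' ** ((1 / nn) *\<^sub>R (transpose X ** X)) ** odiag U is')"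
      by (simp add: ASS_def transpose_scalar matrix_transpose_mul odiag_transpose matrix_scalar_ac
            scalar_matrix_assoc matrix_mul_assoc)
    also have "\<dots> = (1 / nn) *\<^sub>R odiag U is'" by (simp add: SS is's)
    finally show ?thesis .
  qed
  have AMMX: "AMM ** X = odiag U p"
    by (simp add: AMM_eq ASSX flip: matrix_mul_assoc)
  have UtC: "transpose U ** C = mdiag st ** transpose U"
    by (simp add: C_def odiag_def matrix_mul_assoc UtU)
  define R where "R = lin_risk \<sigma> X AMM (odiag U t) \<beta>"
  have Req: "R = (norm (C *v (AMM *v (X *v \<beta>) - \<beta>)))\<^sup>2 + \<sigma>\<^sup>2 * fro (C ** AMM)"
    unfolding R_def risk_eq[OF \<sigma>] msq ..
  define \<gamma> where "\<gamma> = transpose U *v \<beta>"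
  have ng: "norm \<gamma> = norm \<beta>" unfolding \<gamma>_def using norm_orth[of "transpose U"] U by simp
  have bias: "(norm (C *v (AMM *v (X *v \<beta>) - \<beta>)))\<^sup>2 \<le> lam\<^sup>2 * r\<^sup>2"
  proof -
    have "transpose U *v (C *v (AMM *v (X *v \<beta>) - \<beta>)) = mdiag st *v (mdiag p *v \<gamma> - \<gamma>)"
    proof -
      have Tp: "transpose U *v (odiag U p *v \<beta>) = mdiag p *v \<gamma>"
      proof -
        have "transpose U *v (odiag U p *v \<beta>) = (transpose U ** U ** mdiag p ** transpose U) *v \<beta>"
          by (simp only: odiag_def matrix_vector_mul_assoc matrix_mul_assoc)
        also have "\<dots> = mdiag p *v \<gamma>"
          by (simp only: UtU matrix_mul_lid \<gamma>_def matrix_vector_mul_assoc)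
        finally show ?thesis .
      qed
      have AMv: "AMM *v (X *v \<beta>) = odiag U p *v \<beta>" "(AMM ** X) *v \<beta> = odiag U p *v \<beta>"
        by (simp_all only: matrix_vector_mul_assoc AMMX)
      have "transpose U *v (C *v (AMM *v (X *v \<beta>) - \<beta>)) = (transpose U ** C) *v (odiag U p *v \<beta> - \<beta>)"
        by (simp only: AMv matrix_vector_mul_assoc)
      also have "\<dots> = mdiag st *v (transpose U *v (odiag U p *v \<beta> - \<beta>))"
        by (simp only: UtC matrix_vector_mul_assoc)
      also have "transpose U *v (odiag U p *v \<beta> - \<beta>) = mdiag p *v \<gamma> - \<gamma>"
        by (simp only: matrix_vector_mult_diff_distrib Tp \<gamma>_def)
      finally show ?thesis .
    qed
    then have "norm (C *v (AMM *v (X *v \<beta>) - \<beta>)) = norm (mdiag st *v (mdiag p *v \<gamma> - \<gamma>))"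
      by (metis norm_orth orthogonal_matrix_transpose U)
    also have "(norm (mdiag st *v (mdiag p *v \<gamma> - \<gamma>)))\<^sup>2 = (\<Sum>i\<in>UNIV. t$i * (p$i - 1)\<^sup>2 * (\<gamma>$i)\<^sup>2)"
      unfolding norm_sq_sum mdiag_vec
    proof (intro sum.cong refl)
      fix i
      have "p$i * \<gamma>$i - \<gamma>$i = (p$i - 1) * \<gamma>$i" by (simp add: algebra_simps)
      then show "((\<chi> j. st $ j * ((\<chi> k. p $ k * \<gamma> $ k) - \<gamma>) $ j) $ i)\<^sup>2 = t$i * (p$i - 1)\<^sup>2 * (\<gamma>$i)\<^sup>2"
        by (simp add: st_def power_mult_distrib tge)
    qed
    finally have "(norm (C *v (AMM *v (X *v \<beta>) - \<beta>)))\<^sup>2 = (\<Sum>i\<in>UNIV. t$i * (p$i - 1)\<^sup>2 * (\<gamma>$i)\<^sup>2)" .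
    also have "\<dots> \<le> (\<Sum>i\<in>UNIV. lam\<^sup>2 * (\<gamma>$i)\<^sup>2)"
    proof (rule sum_mono)
      fix i
      have "t$i * (p$i - 1)\<^sup>2 \<le> lam\<^sup>2"
        unfolding p_def using scalar_ub(2)[OF t s lam nn, of i] by simp
      then show "t$i * (p$i - 1)\<^sup>2 * (\<gamma>$i)\<^sup>2 \<le> lam\<^sup>2 * (\<gamma>$i)\<^sup>2"
        by (rule mult_right_mono) simp
    qed
    also have "\<dots> = lam\<^sup>2 * (norm \<beta>)\<^sup>2"
      by (simp add: norm_sq_sum ng[symmetric] sum_distrib_left)
    also have "\<dots> \<le> lam\<^sup>2 * r\<^sup>2"
      by (rule mult_left_mono) (use \<beta> in \<open>simp_all add: power_mono\<close>)
    finally show ?thesis .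
  qed
  define w where "w = (\<chi> i. st$i * p$i)"
  define N where "N = transpose U ** ASS"
  have var: "fro (C ** AMM) = (\<Sum>i\<in>UNIV. t$i * (p$i)\<^sup>2 * (1 / (nn * s$i)))"
  proof -
    have "C ** AMM = U ** (mdiag w ** N)"
      by (simp add: AMM_eq C_def N_def w_def odiag_mult[OF U] matrix_mul_assoc)
         (simp add: odiag_def matrix_mul_assoc)
    then have "fro (C ** AMM) = fro (mdiag w ** N)" by (simp add: fro_orth U)
    also have "\<dots> = (\<Sum>i\<in>UNIV. (w$i)\<^sup>2 * (N ** transpose N)$i$i)"
      unfolding fro_mdiag by (simp add: matrix_matrix_mult_def transpose_def power2_eq_square)
    also have "N ** transpose N = (1 / nn) *\<^sub>R mdiag is'"
    proof -
      have "N ** transpose N = transpose U ** (ASS ** transpose ASS) ** U"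
        by (simp add: N_def matrix_transpose_mul matrix_mul_assoc)
      also have "\<dots> = (1 / nn) *\<^sub>R mdiag is'"
        by (simp add: ASST odiag_def matrix_scalar_ac scalar_matrix_assoc matrix_mul_assoc oc)
           (simp add: UtU matrix_mul_assoc flip: scalar_matrix_assoc)
      finally show ?thesis .
    qed
    finally show ?thesis
      by (simp add: w_def st_def is'_def mdiag_def power_mult_distrib tge)
  qed
  have val: "(\<Sum>i\<in>UNIV. (\<sigma>\<^sup>2 / nn) * (t $ i / s $ i) * max 0 (1 - lam / sqrt (t $ i)))
      = lam\<^sup>2 * r\<^sup>2 + \<sigma>\<^sup>2 * (\<Sum>i\<in>UNIV. t$i * (p$i)\<^sup>2 * (1 / (nn * s$i)))"
  proof -
    have "(\<Sum>i\<in>UNIV. (\<sigma>\<^sup>2 / nn) * (t $ i / s $ i) * max 0 (1 - lam / sqrt (t $ i)))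
       = (\<Sum>i\<in>UNIV. lam\<^sup>2 * ((\<sigma>\<^sup>2 / nn) * ((1 / s$i) * max 0 (sqrt (t$i) / lam - 1)))
            + \<sigma>\<^sup>2 * (t$i * (p$i)\<^sup>2 * (1 / (nn * s$i))))"
      by (intro sum.cong refl, simp only: p_def vec_lambda_beta) (rule scalar_ub(1)[OF t s lam nn, symmetric])
    also have "\<dots> = lam\<^sup>2 * r\<^sup>2 + \<sigma>\<^sup>2 * (\<Sum>i\<in>UNIV. t$i * (p$i)\<^sup>2 * (1 / (nn * s$i)))"
      unfolding sum.distrib cond[folded nn_def, symmetric]
      by (simp add: sum_distrib_left)
    finally show ?thesis .
  qed
  have "R \<le> (\<Sum>i\<in>UNIV. (\<sigma>\<^sup>2 / nn) * (t $ i / s $ i) * max 0 (1 - lam / sqrt (t $ i)))"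
    unfolding Req val var using bias by simp
  then show ?thesis
    unfolding R_def AMM_def ASS_def msq Ci Si[unfolded nn_def] p_def nn_def ist_def is'_def .
qed

theorem theorem1:
  fixes X :: "real ^'d ^'n" and ST U :: "real ^'d ^'d" and t s :: "real ^'d"
    and \<sigma> r lam :: real
  assumes "\<sigma> > 0" and "r > 0"
    and "invertible ((1 / real CARD('n)) *\<^sub>R (transpose X ** X))"
    and "pos_def ST"
    and "orthogonal_matrix U"
    and "\<forall>i. t $ i > 0" and "\<forall>i. s $ i > 0"
    and "ST = U ** mdiag t ** transpose U"
    and "(1 / real CARD('n)) *\<^sub>R (transpose X ** X) = U ** mdiag s ** transpose U"
    and "lam > 0"
    and "(\<sigma>\<^sup>2 / real CARD('n)) * (\<Sum>i\<in>UNIV. (1 / s $ i) * max 0 (sqrt (t $ i) / lam - 1)) = r\<^sup>2"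
  shows "minimax_lin_risk \<sigma> X ST r =
           (\<Sum>i\<in>UNIV. (\<sigma>\<^sup>2 / real CARD('n)) * (t $ i / s $ i) * max 0 (1 - lam / sqrt (t $ i)))
       \<and> (let SS = (1 / real CARD('n)) *\<^sub>R (transpose X ** X);
              A_SS = (1 / real CARD('n)) *\<^sub>R (matrix_inv SS ** transpose X);
              A_MM = matrix_inv (msqrt ST) ** U
                     ** mdiag (\<chi> i. max 0 (1 - lam / sqrt (t $ i)))
                     ** transpose U ** msqrt ST ** A_SS
          in (SUP \<beta> \<in> cball 0 r. lin_risk \<sigma> X A_MM ST \<beta>) =
             (\<Sum>i\<in>UNIV. (\<sigma>\<^sup>2 / real CARD('n)) * (t $ i / s $ i) * max 0 (1 - lam / sqrt (t $ i))))"
  proof -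
  note \<sigma> = assms(1) and r = assms(2) and U = assms(5) and lam = assms(10) and cond = assms(11)
  have t: "\<And>i. t$i > 0" using assms(6) by blast
  have s: "\<And>i. s$i > 0" using assms(7) by blast
  have ST: "ST = odiag U t" using assms(8) by (simp add: odiag_def)
  have XX: "(1 / real CARD('n)) *\<^sub>R (transpose X ** X) = odiag U s" using assms(9) by (simp add: odiag_def)
  define val where "val = (\<Sum>i\<in>UNIV. (\<sigma>\<^sup>2 / real CARD('n)) * (t $ i / s $ i) * max 0 (1 - lam / sqrt (t $ i)))"
  have LBa: "val \<le> (SUP \<beta> \<in> cball 0 r. lin_risk \<sigma> X A ST \<beta>)" for A
    unfolding ST val_def by (rule lower_bound[OF \<sigma> r U t s XX lam cond])
  define AMM where "AMM = matrix_inv (msqrt ST) ** U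
                     ** mdiag (\<chi> i. max 0 (1 - lam / sqrt (t $ i)))
                     ** transpose U ** msqrt ST **
                 ((1 / real CARD('n)) *\<^sub>R (matrix_inv ((1 / real CARD('n)) *\<^sub>R (transpose X ** X)) ** transpose X))"
  have UBa: "lin_risk \<sigma> X AMM ST \<beta> \<le> val" if "\<beta> \<in> cball 0 r" for \<beta>
  proof -
    have "norm \<beta> \<le> r" using that by simp
    then show ?thesis
      unfolding AMM_def ST val_def by (rule upper_bound[OF \<sigma> r U t s XX lam cond])
  qed
  have ne: "cball 0 r \<noteq> {}" using r by simp
  have SUPeq: "(SUP \<beta> \<in> cball 0 r. lin_risk \<sigma> X AMM ST \<beta>) = val"
  proof (rule antisym)
    show "(SUP \<beta> \<in> cball 0 r. lin_risk \<sigma> X AMM ST \<beta>) \<le> val"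
      by (rule cSUP_least[OF ne UBa])
    show "val \<le> (SUP \<beta> \<in> cball 0 r. lin_risk \<sigma> X AMM ST \<beta>)" by (rule LBa)
  qed
  have MM: "minimax_lin_risk \<sigma> X ST r = val"
    unfolding minimax_lin_risk_def
  proof (rule antisym)
    have bdd: "bdd_below ((\<lambda>A. SUP \<beta> \<in> cball 0 r. lin_risk \<sigma> X A ST \<beta>) ` UNIV)"
      by (rule bdd_belowI2[where m=val]) (rule LBa)
    have "(INF A. SUP \<beta> \<in> cball 0 r. lin_risk \<sigma> X A ST \<beta>) \<le> (SUP \<beta> \<in> cball 0 r. lin_risk \<sigma> X AMM ST \<beta>)"
      by (rule cINF_lower[OF bdd]) simp
    then show "(INF A. SUP \<beta> \<in> cball 0 r. lin_risk \<sigma> X A ST \<beta>) \<le> val" using SUPeq by simp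
    show "val \<le> (INF A. SUP \<beta> \<in> cball 0 r. lin_risk \<sigma> X A ST \<beta>)"
      by (rule cINF_greatest) (simp_all add: LBa)
  qed
  show ?thesis
    unfolding Let_def using MM SUPeq unfolding AMM_def val_def by simp
qed

end
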